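(* Let $k\ge 2$ and $p\in\mathbb{S}^n$, and let $\Sigma^k\subset\mathbb{S}^n$ be a minimal submanifold. Then: (i) $\mathrm{div}_\Sigma\Phi_p\le 1$ on $\Sigma\setminus\{-p\}$ and $\mathrm{div}_\Sigma\Psi_p\le 1$ on $\Sigma\setminus\{p\}$. (ii) $\Psi_p=(\psi\circ\mathbf{d}_p)\nabla\mathbf{d}_p$, where $\psi(r):=\dfrac{I_k(r)-I_k(\pi)}{\sin^{k-1}r}$. If moreover $k=2j$ is even, then \[\psi(r)=\sum_{i=1}^j\frac{-a_i\sin r}{(1-\cos r)^i},\qquad a_1:=\frac{1}{2j-1},\quad a_{i+1}:=\frac{2(j-i)}{2j-(i+1)}a_i\ (i=1,\dots,j-1).\]
   Context: $\mathbb{S}^n$ is the unit round sphere with Levi-Civita connection $\nabla$; $\mathbf{d}_q$ is geodesic distance from $q$. $I_k(r)=\int_0^r\sin^{k-1}s\,ds$. Define $\varphi(t)=I_k(t)\sin^{1-k}t$ for $t\in(0,\pi)$ and $\varphi(0)=0$. For $q\in\mathbb{S}^n$, $\Phi_q:=(\varphi\circ\mathbf{d}_q)\nabla\mathbf{d}_q$ on $\mathbb{S}^n\setminus\{-q\}$ and $\Psi_q:=\Phi_{-q}$ on $\mathbb{S}^n\setminus\{q\}$. $\mathrm{div}_\Sigma$ denotes the divergence along $\Sigma$. *)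

theory Defs
  imports "HOL-Analysis.Analysis"
begin

text \<open>The unit sphere S^n is the unit sphere of a Euclidean space 'a (DIM('a) = n+1).\<close>

definition I_k :: "nat \<Rightarrow> real \<Rightarrow> real" where
  "I_k k r = integral {0..r} (\<lambda>s. sin s ^ (k - 1))"

definition phi_k :: "nat \<Rightarrow> real \<Rightarrow> real" where
  "phi_k k t = (if t = 0 then 0 else I_k k t / sin t ^ (k - 1))"

definition psi_k :: "nat \<Rightarrow> real \<Rightarrow> real" where
  "psi_k k r = (I_k k r - I_k k pi) / sin r ^ (k - 1)"

definition sdist :: "'a::euclidean_space \<Rightarrow> 'a \<Rightarrow> real" where
  "sdist q x = arccos (x \<bullet> q)"

text \<open>Spherical gradient of sdist q at x (x a unit vector, x \<noteq> q, -q):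
  -(q - (x.q) x) / |q - (x.q) x|, where |q - (x.q) x| = sin (sdist q x).\<close>
definition grad_sdist :: "'a::euclidean_space \<Rightarrow> 'a \<Rightarrow> 'a" where
  "grad_sdist q x = (1 / sin (sdist q x)) *\<^sub>R ((x \<bullet> q) *\<^sub>R x - q)"

definition Phi :: "nat \<Rightarrow> 'a::euclidean_space \<Rightarrow> 'a \<Rightarrow> 'a" where
  "Phi k q x = phi_k k (sdist q x) *\<^sub>R grad_sdist q x"

definition Psi :: "nat \<Rightarrow> 'a::euclidean_space \<Rightarrow> 'a \<Rightarrow> 'a" where
  "Psi k q = Phi k (- q)"

fun a_coef :: "nat \<Rightarrow> nat \<Rightarrow> real" where
  "a_coef j 0 = 0"
| "a_coef j (Suc 0) = 1 / (2 * real j - 1)"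
| "a_coef j (Suc (Suc i)) =
     2 * (real j - real (Suc i)) / (2 * real j - real (Suc (Suc i))) * a_coef j (Suc i)"

definition tangent_onb :: "('k::euclidean_space \<Rightarrow> 'a::euclidean_space) \<Rightarrow> ('k \<Rightarrow> 'k) \<Rightarrow> bool" where
  "tangent_onb L v \<longleftrightarrow>
     (\<forall>b\<in>Basis. \<forall>c\<in>Basis. L (v b) \<bullet> L (v c) = (if b = c then 1 else 0))"

text \<open>Component of z normal to Sigma inside the sphere at the point x: remove the components
  along the tangent frame L (v c) and along the position vector x.\<close>
definition normal_part ::
  "('k::euclidean_space \<Rightarrow> 'a::euclidean_space) \<Rightarrow> ('k \<Rightarrow> 'k) \<Rightarrow> 'a \<Rightarrow> 'a \<Rightarrow> 'a" where
  "normal_part L v x z = z - (\<Sum>c\<in>Basis. (z \<bullet> L (v c)) *\<^sub>R L (v c)) - (z \<bullet> x) *\<^sub>R x"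

text \<open>A k-dimensional (k = DIM('k)) minimal submanifold of the unit sphere, given locally
  by a C^2 immersion f : U \<rightarrow> S^n, U open in R^k, with vanishing mean curvature
  H = sum_i II(e_i,e_i) (second fundamental form in S^n).\<close>
definition minimal_immersion :: "'k::euclidean_space set \<Rightarrow> ('k \<Rightarrow> 'a::euclidean_space) \<Rightarrow> bool" where
  "minimal_immersion U f \<longleftrightarrow>
     open U \<and> (\<forall>u\<in>U. norm (f u) = 1) \<and>
     (\<exists>Df :: 'k \<Rightarrow> ('k \<Rightarrow>\<^sub>L 'a). \<exists>D2f :: 'k \<Rightarrow> ('k \<Rightarrow>\<^sub>L ('k \<Rightarrow>\<^sub>L 'a)).
        (\<forall>u\<in>U. (f has_derivative blinfun_apply (Df u)) (at u)) \<and>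
        (\<forall>u\<in>U. (Df has_derivative blinfun_apply (D2f u)) (at u)) \<and>
        continuous_on U D2f \<and>
        (\<forall>u\<in>U. inj (blinfun_apply (Df u))) \<and>
        (\<forall>u\<in>U. \<forall>v. tangent_onb (blinfun_apply (Df u)) v \<longrightarrow>
            (\<Sum>b\<in>Basis. normal_part (blinfun_apply (Df u)) v (f u)
                            (blinfun_apply (blinfun_apply (D2f u) (v b)) (v b))) = 0))"

text \<open>div_Sigma X at the point f u, computed in the orthonormal tangent frame
  e_b = Df(u)(v b):  sum_b < nabla_{e_b} X, e_b >, with nabla_{e_b} X = D(X o f)(u)(v b)
  (tangential components agree with the Levi-Civita connection of S^n).\<close>
definition div_Sigma ::
  "('a::euclidean_space \<Rightarrow> 'a) \<Rightarrow> ('k::euclidean_space \<Rightarrow> 'a) \<Rightarrow> 'k \<Rightarrow> ('k \<Rightarrow> 'k) \<Rightarrow> real" where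
  "div_Sigma X f u v =
     (\<Sum>b\<in>Basis. frechet_derivative (X \<circ> f) (at u) (v b) \<bullet> frechet_derivative f (at u) (v b))"

end

theory Submission
  imports Defs
begin


lemma I_cont: "continuous_on {0..b} (I_k k)"
  unfolding I_k_def[abs_def]
  by (intro indefinite_integral_continuous_1 integrable_continuous_real continuous_intros)

lemma I_deriv: assumes "0 < r" shows "(I_k k has_real_derivative sin r ^ (k-1)) (at r)"
proof -
  have "((\<lambda>x. integral {0..x} (\<lambda>s. sin s ^ (k - 1))) has_real_derivative sin r ^ (k-1)) (at r within {0..r+1})"
    using assms by (intro integral_has_real_derivative continuous_intros) auto
  moreover have "at r within {0..r+1} = at r" using assms by (intro at_within_Icc_at) auto
  ultimately show ?thesis unfolding I_k_def[abs_def] by simp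
qed

lemma I_nonneg: assumes "0 \<le> r" "r \<le> pi" shows "0 \<le> I_k k r"
  unfolding I_k_def using assms
  by (intro integral_nonneg) (auto intro!: integrable_continuous_real continuous_intros simp: sin_ge_zero)

lemma I_0[simp]: "I_k k 0 = 0" unfolding I_k_def by simp

lemma I_upper: assumes "k \<ge> 1" "0 \<le> d" "d \<le> pi"
  shows "real k * cos d * I_k k d \<le> sin d ^ k"
proof -
  define F where "F x = sin x ^ k - real k * cos x * I_k k x" for x
  have "F 0 \<le> F d"
  proof (rule DERIV_nonneg_imp_increasing_open[OF assms(2)])
    fix x assume x: "0 < x" "x < d"
    have dI: "(I_k k has_real_derivative sin x ^ (k-1)) (at x)" by (rule I_deriv) (use x in auto)
    have "(F has_real_derivative (real k * sin x * I_k k x)) (at x)"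
      unfolding F_def[abs_def]
      by (rule derivative_eq_intros dI refl | simp add: algebra_simps)+
    moreover have "0 \<le> real k * sin x * I_k k x" using x assms
      by (intro mult_nonneg_nonneg I_nonneg sin_ge_zero) auto
    ultimately show "\<exists>y. (F has_real_derivative y) (at x) \<and> 0 \<le> y" by metis
  next
    show "continuous_on {0..d} F" unfolding F_def[abs_def]
      using assms by (intro continuous_intros continuous_on_subset[OF I_cont[of pi]]) auto
  qed
  moreover have "F 0 = 0" using assms by (simp add: F_def)
  ultimately show ?thesis using assms by (simp add: F_def zero_power)
qed

lemma I_lower: assumes "k \<ge> 1" "0 \<le> d" "d \<le> pi"
  shows "sin d ^ k \<le> real k * I_k k d"
proof -
  define F where "F x = real k * I_k k x - sin x ^ k" for x
  have "F 0 \<le> F d"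
  proof (rule DERIV_nonneg_imp_increasing_open[OF assms(2)])
    fix x assume x: "0 < x" "x < d"
    have dI: "(I_k k has_real_derivative sin x ^ (k-1)) (at x)" by (rule I_deriv) (use x in auto)
    have "(F has_real_derivative (real k * sin x ^ (k-1) - real k * sin x ^ (k-1) * cos x)) (at x)"
      unfolding F_def[abs_def]
      by (rule derivative_eq_intros dI refl | simp)+
    moreover have "0 \<le> real k * sin x ^ (k-1) - real k * sin x ^ (k-1) * cos x"
    proof -
      have "0 \<le> real k * sin x ^ (k-1) * (1 - cos x)" using x assms
        by (intro mult_nonneg_nonneg zero_le_power sin_ge_zero) auto
      thus ?thesis by (simp add: algebra_simps)
    qed
    ultimately show "\<exists>y. (F has_real_derivative y) (at x) \<and> 0 \<le> y" by metis
  next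
    show "continuous_on {0..d} F" unfolding F_def[abs_def]
      using assms by (intro continuous_intros continuous_on_subset[OF I_cont[of pi]]) auto
  qed
  moreover have "F 0 = 0" using assms by (simp add: F_def)
  ultimately show ?thesis using assms by (simp add: F_def zero_power)
qed

lemma I_sym: assumes "0 \<le> d" "d \<le> pi" shows "I_k k (pi - d) = I_k k pi - I_k k d"
proof -
  define J where "J x = I_k k (pi - x) + I_k k x" for x
  have "J d = J 0"
  proof (cases "d = 0")
    case False
    show ?thesis
    proof (rule DERIV_isconst2[of 0 pi])
      show "continuous_on {0..pi} J" unfolding J_def[abs_def]
        by (intro continuous_intros continuous_on_compose2[OF I_cont[of pi]] I_cont) auto
      fix x assume x: "0 < x" "x < pi"
      have d1: "(I_k k has_real_derivative sin (pi-x)^(k-1)) (at (pi-x))" by (rule I_deriv) (use x in auto)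
      have d2: "((\<lambda>z. pi - z) has_real_derivative -1) (at x)" by (auto intro!: derivative_eq_intros)
      have dI: "(I_k k has_real_derivative sin x ^ (k-1)) (at x)" by (rule I_deriv) (use x in auto)
      have "(J has_real_derivative (sin (pi - x) ^ (k-1) * (-1) + sin x ^ (k-1))) (at x)"
        unfolding J_def[abs_def]
        using DERIV_add[OF DERIV_chain2[OF d1 d2] dI] by simp
      thus "(J has_real_derivative 0) (at x)" by simp
    qed (use assms in auto)
  qed simp
  thus ?thesis by (simp add: J_def)
qed


definition H :: "nat \<Rightarrow> real \<Rightarrow> real" where
  "H k c = phi_k k (arccos c) * (1 / sin (arccos c))"

lemma Phi_eq: "Phi k q x = H k (x \<bullet> q) *\<^sub>R ((x \<bullet> q) *\<^sub>R x - q)"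
  unfolding Phi_def grad_sdist_def sdist_def H_def by simp

lemma H_eq: assumes "k \<ge> 1" "0 < d" "d < pi" shows "H k (cos d) = I_k k d / sin d ^ k"
proof -
  have s: "sin d > 0" using assms by (intro sin_gt_zero) auto
  obtain m where k: "k = Suc m" using assms by (cases k) auto
  show ?thesis using assms s unfolding H_def phi_k_def k by (simp add: arccos_cos)
qed

lemma h_deriv: assumes "k \<ge> 1" "0 < d" "d < pi"
  shows "((\<lambda>d. I_k k d / sin d ^ k) has_real_derivative (1 / sin d - real k * I_k k d * cos d / sin d ^ (k+1))) (at d)"
proof -
  have s: "sin d > 0" using assms by (intro sin_gt_zero) auto
  obtain m where k: "k = Suc m" using assms by (cases k) auto
  have dI: "(I_k k has_real_derivative sin d ^ (k-1)) (at d)" by (rule I_deriv) (use assms in auto)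
  have "((\<lambda>d. I_k k d / sin d ^ k) has_real_derivative
     (sin d ^ (k-1) * sin d ^ k - I_k k d * (real k * sin d ^ (k-1) * cos d)) / (sin d ^ k * sin d ^ k)) (at d)"
    by (rule derivative_eq_intros dI refl | use s in simp)+
  moreover have "(sin d ^ (k-1) * sin d ^ k - I_k k d * (real k * sin d ^ (k-1) * cos d)) / (sin d ^ k * sin d ^ k)
     = 1 / sin d - real k * I_k k d * cos d / sin d ^ (k+1)"
    using s unfolding k by (simp add: field_simps)
  ultimately show ?thesis by simp
qed

lemma H_deriv: assumes "k \<ge> 1" "-1 < c" "c < 1"
  shows "\<exists>D. (H k has_real_derivative D) (at c) \<and> (1 - c^2) * D = real k * H k c * c - 1"
proof -
  define d where "d = arccos c"
  have d: "0 < d" "d < pi" using assms arccos_lt_bounded unfolding d_def by auto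
  have cd: "cos d = c" using assms unfolding d_def by simp
  have s: "sin d > 0" using d by (intro sin_gt_zero) auto
  have sq: "sqrt (1 - c^2) = sin d" using assms unfolding d_def by (simp add: sin_arccos)
  have s2: "sin d ^ 2 = 1 - c^2" using cd sin_squared_eq by auto
  define D where "D = (1 / sin d - real k * I_k k d * cos d / sin d ^ (k+1)) * inverse (- sqrt (1 - c\<^sup>2))"
  have "((\<lambda>y. (\<lambda>d. I_k k d / sin d ^ k) (arccos y)) has_real_derivative D) (at c)"
    unfolding D_def using DERIV_chain2[OF h_deriv[OF assms(1) d, unfolded d_def] DERIV_arccos[OF assms(2,3)]] unfolding d_def by simp
  then have dH: "(H k has_real_derivative D) (at c)"
  proof (rule has_field_derivative_transform_within_open[where S="{-1<..<1}"])
    fix y :: real assume y: "y \<in> {-1<..<1}"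
    then have "0 < arccos y" "arccos y < pi" using arccos_lt_bounded by auto
    then show "I_k k (arccos y) / sin (arccos y) ^ k = H k y" using H_eq[OF assms(1), of "arccos y"] y by simp
  qed (use assms in auto)
  have Hc: "H k c = I_k k d / sin d ^ k" using H_eq[OF assms(1) d] cd by simp
  have alg: "\<And>s I c. s > 0 \<Longrightarrow> s^2 * ((1 / s - real k * I * c / s ^ (k+1)) * inverse (- s)) = real k * (I / s^k) * c - 1"
    by (simp add: field_simps power2_eq_square)
  have "(1 - c^2) * D = real k * H k c * c - 1"
    unfolding D_def Hc sq s2[symmetric] using alg[OF s, of "I_k k d" c] cd s by simp
  with dH show ?thesis by blast
qed

lemma kHc_le: assumes "k \<ge> 1" "-1 < c" "c < 1" shows "real k * H k c * c \<le> 1"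
proof -
  define d where "d = arccos c"
  have d: "0 < d" "d < pi" using assms arccos_lt_bounded unfolding d_def by auto
  have cd: "cos d = c" using assms unfolding d_def by simp
  have s: "sin d > 0" using d by (intro sin_gt_zero) auto
  have Hc: "H k c = I_k k d / sin d ^ k" using H_eq[OF assms(1) d] cd by simp
  have "real k * cos d * I_k k d \<le> sin d ^ k" using I_upper[OF assms(1)] d by auto
  then show ?thesis unfolding Hc using s cd by (simp add: field_simps)
qed

lemma H_bounds: assumes "k \<ge> 1" "0 < c" "c < 1" shows "1 / real k \<le> H k c" "H k c \<le> 1 / (real k * c)"
proof -
  define d where "d = arccos c"
  have d: "0 < d" "d < pi" using assms arccos_lt_bounded unfolding d_def by auto
  have cd: "cos d = c" using assms unfolding d_def by simp
  have s: "sin d > 0" using d by (intro sin_gt_zero) auto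
  have Hc: "H k c = I_k k d / sin d ^ k" using H_eq[OF assms(1) d] cd by simp
  have "real k * cos d * I_k k d \<le> sin d ^ k" using I_upper[OF assms(1)] d by auto
  then show "H k c \<le> 1 / (real k * c)" unfolding Hc using s cd assms by (simp add: field_simps)
  have "sin d ^ k \<le> real k * I_k k d" using I_lower[OF assms(1)] d by auto
  then show "1 / real k \<le> H k c" unfolding Hc using s cd assms by (simp add: field_simps)
qed

definition Ht :: "nat \<Rightarrow> real \<Rightarrow> real" where
  "Ht k c = (if c = 1 then 1 / real k else H k c)"

lemma Ht_cont: assumes "k \<ge> 1" shows "continuous (at 1 within {-1..1}) (Ht k)"
  unfolding continuous_within
proof (rule tendsto_sandwich[where f="\<lambda>_. 1 / real k" and h="\<lambda>c. 1 / (real k * c)"])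
  have ev: "\<forall>\<^sub>F c in at (1::real) within {-1..1}. 0 < c \<and> c < 1"
  proof -
    have h: "\<forall>\<^sub>F c in nhds (1::real). c \<in> {0<..}" by (intro eventually_nhds_in_open) auto
    show ?thesis unfolding eventually_at_filter
      by (rule eventually_mono[OF h]) auto
  qed
  show "\<forall>\<^sub>F c in at 1 within {-1..1}. 1 / real k \<le> Ht k c"
    using ev by eventually_elim (use H_bounds[OF assms] in \<open>auto simp: Ht_def\<close>)
  show "\<forall>\<^sub>F c in at 1 within {-1..1}. Ht k c \<le> 1 / (real k * c)"
    using ev by eventually_elim (use H_bounds[OF assms] in \<open>auto simp: Ht_def\<close>)
  show "((\<lambda>_. 1 / real k) \<longlongrightarrow> Ht k 1) (at 1 within {-1..1})" by (simp add: Ht_def)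
  have "((\<lambda>c. 1 / (real k * c)) \<longlongrightarrow> 1 / (real k * 1)) (at 1 within {-1..1})"
    using assms by (intro tendsto_intros) auto
  then show "((\<lambda>c. 1 / (real k * c)) \<longlongrightarrow> Ht k 1) (at 1 within {-1..1})" by (simp add: Ht_def)
qed

lemma deriv_zero_prod:
  fixes g :: "'k::real_normed_vector \<Rightarrow> 'a::real_normed_vector" and a :: "'k \<Rightarrow> real"
  assumes dg: "(g has_derivative G) (at x)" and g0: "g x = 0" and ca: "continuous (at x) a"
  shows "((\<lambda>y. a y *\<^sub>R g y) has_derivative (\<lambda>h. a x *\<^sub>R G h)) (at x)"
proof -
  have bl: "bounded_linear G" using dg by (rule has_derivative_bounded_linear)
  obtain K where K: "\<And>h. norm (G h) \<le> norm h * K" using bounded_linear.bounded[OF bl] by blast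
  define r where "r y = norm (g y - g x - G (y - x)) / norm (y - x)" for y
  have r0: "(r \<longlongrightarrow> 0) (at x)" using dg unfolding has_derivative_iff_norm r_def by simp
  have a0: "((\<lambda>y. a y - a x) \<longlongrightarrow> 0) (at x)"
    using ca unfolding continuous_at by (simp add: LIM_zero)
  show ?thesis unfolding has_derivative_iff_norm
  proof
    show "bounded_linear (\<lambda>h. a x *\<^sub>R G h)" using bl by (intro bounded_linear_intros)
    show "((\<lambda>y. norm (a y *\<^sub>R g y - a x *\<^sub>R g x - a x *\<^sub>R G (y - x)) / norm (y - x)) \<longlongrightarrow> 0) (at x)"
    proof (rule tendsto_sandwich[where f="\<lambda>_. 0" and h="\<lambda>y. \<bar>a x\<bar> * r y + \<bar>a y - a x\<bar> * (r y + K)"])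
      show "\<forall>\<^sub>F y in at x. 0 \<le> norm (a y *\<^sub>R g y - a x *\<^sub>R g x - a x *\<^sub>R G (y - x)) / norm (y - x)" by simp
      show "\<forall>\<^sub>F y in at x. norm (a y *\<^sub>R g y - a x *\<^sub>R g x - a x *\<^sub>R G (y - x)) / norm (y - x)
             \<le> \<bar>a x\<bar> * r y + \<bar>a y - a x\<bar> * (r y + K)"
      proof (rule always_eventually, intro allI)
        fix y
        show "norm (a y *\<^sub>R g y - a x *\<^sub>R g x - a x *\<^sub>R G (y - x)) / norm (y - x)
             \<le> \<bar>a x\<bar> * r y + \<bar>a y - a x\<bar> * (r y + K)"
        proof (cases "y = x")
          case True
          then show ?thesis using K[of 0] by (simp add: r_def)
        next
          case False
          then have n: "norm (y - x) > 0" by simp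
          have eq: "a y *\<^sub>R g y - a x *\<^sub>R g x - a x *\<^sub>R G (y - x)
              = a x *\<^sub>R (g y - g x - G (y - x)) + (a y - a x) *\<^sub>R ((g y - g x - G (y - x)) + G (y - x))"
            using g0 by (simp add: algebra_simps)
          have "norm (a y *\<^sub>R g y - a x *\<^sub>R g x - a x *\<^sub>R G (y - x))
              \<le> \<bar>a x\<bar> * norm (g y - g x - G (y - x)) + \<bar>a y - a x\<bar> * (norm (g y - g x - G (y - x)) + norm (y - x) * K)"
          proof -
            have t: "norm (g y - g x) \<le> norm (g y - g x - G (y - x)) + norm (y - x) * K"
              using norm_triangle_ineq[of "g y - g x - G (y - x)" "G (y - x)"] K[of "y-x"] by simp
            show ?thesis unfolding eq
              by (rule order_trans[OF norm_triangle_ineq])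
                 (auto intro!: add_mono mult_left_mono t)
          qed
          also have "\<dots> = (\<bar>a x\<bar> * r y + \<bar>a y - a x\<bar> * (r y + K)) * norm (y - x)"
            using n by (simp add: r_def field_simps)
          finally show ?thesis using n by (simp add: divide_le_eq)
        qed
      qed
      show "((\<lambda>_. 0) \<longlongrightarrow> 0) (at x)" by simp
      have "((\<lambda>y. \<bar>a x\<bar> * r y + \<bar>a y - a x\<bar> * (r y + K)) \<longlongrightarrow> \<bar>a x\<bar> * 0 + \<bar>0\<bar> * (0 + K)) (at x)"
        by (intro tendsto_intros r0 a0)
      then show "((\<lambda>y. \<bar>a x\<bar> * r y + \<bar>a y - a x\<bar> * (r y + K)) \<longlongrightarrow> 0) (at x)" by simp
    qed
  qed
qed

lemma bessel:
  fixes e :: "'b \<Rightarrow> 'a::euclidean_space"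
  assumes fin: "finite B" and orth: "\<And>b c. b \<in> B \<Longrightarrow> c \<in> B \<Longrightarrow> e b \<bullet> e c = (if b = c then 1 else 0)"
    and xe: "\<And>b. b \<in> B \<Longrightarrow> x \<bullet> e b = 0" and nx: "norm x = 1"
  shows "(\<Sum>b\<in>B. (e b \<bullet> q)^2) + (x \<bullet> q)^2 \<le> q \<bullet> q"
proof -
  define S where "S = (\<Sum>b\<in>B. (e b \<bullet> q)^2)"
  define P where "P = (\<Sum>b\<in>B. (q \<bullet> e b) *\<^sub>R e b)"
  have xx: "x \<bullet> x = 1" using nx by (simp add: norm_eq_1)
  have Pe: "P \<bullet> e c = q \<bullet> e c" if "c \<in> B" for c
  proof -
    have "P \<bullet> e c = (\<Sum>b\<in>B. (q \<bullet> e b) * (if b = c then 1 else 0))"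
      unfolding P_def inner_sum_left using orth that by (intro sum.cong) auto
    also have "\<dots> = q \<bullet> e c" using fin that by (simp add: if_distrib sum.delta cong: if_cong)
    finally show ?thesis .
  qed
  have PP: "P \<bullet> P = S"
  proof -
    have "(\<Sum>b\<in>B. (q \<bullet> e b) *\<^sub>R e b) \<bullet> P = (\<Sum>b\<in>B. (q \<bullet> e b) * (e b \<bullet> P))"
      by (simp add: inner_sum_left)
    then have "P \<bullet> P = (\<Sum>b\<in>B. (q \<bullet> e b) * (e b \<bullet> P))" by (simp add: P_def[symmetric])
    also have "\<dots> = S" unfolding S_def using Pe[unfolded inner_commute[of P]] by (intro sum.cong) (auto simp: power2_eq_square inner_commute)
    finally show ?thesis .
  qed
  have qP: "q \<bullet> P = S" unfolding P_def S_def inner_sum_right by (simp add: power2_eq_square inner_commute)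
  have xP: "x \<bullet> P = 0" unfolding P_def inner_sum_right using xe by simp
  have "0 \<le> (q - P - (q \<bullet> x) *\<^sub>R x) \<bullet> (q - P - (q \<bullet> x) *\<^sub>R x)" by simp
  also have "\<dots> = q \<bullet> q - S - (x \<bullet> q)^2"
    using PP qP xP xx by (simp add: algebra_simps inner_commute power2_eq_square)
  finally show ?thesis unfolding S_def by simp
qed

lemma div_le_1:
  fixes q :: "'a::euclidean_space" and U :: "'k::euclidean_space set" and f :: "'k \<Rightarrow> 'a"
  assumes nq: "norm q = 1" and mi: "minimal_immersion U f" and u: "u \<in> U"
    and tb: "tangent_onb (frechet_derivative f (at u)) v" and fu: "f u \<noteq> - q"
  shows "div_Sigma (Phi DIM('k) q) f u v \<le> 1"
proof -
  from mi obtain Df where op: "open U" and unit: "\<forall>u\<in>U. norm (f u) = 1"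
    and fd: "\<forall>u\<in>U. (f has_derivative blinfun_apply (Df u)) (at u)"
    unfolding minimal_immersion_def by blast
  define L where "L = blinfun_apply (Df u)"
  have dfu: "(f has_derivative L) (at u)" using fd u L_def by auto
  have fr: "frechet_derivative f (at u) = L" using frechet_derivative_at[OF dfu] by simp
  define e where "e b = L (v b)" for b
  have orth: "\<And>b c. b \<in> Basis \<Longrightarrow> c \<in> Basis \<Longrightarrow> e b \<bullet> e c = (if b = c then 1 else 0)"
    using tb unfolding tangent_onb_def fr e_def by auto
  have nfu: "norm (f u) = 1" using unit u by auto
  have fperp: "f u \<bullet> L w = 0" for w
  proof -
    have d1: "((\<lambda>y. f y \<bullet> f y) has_derivative (\<lambda>h. f u \<bullet> L h + L h \<bullet> f u)) (at u)"
      using has_derivative_inner[OF dfu dfu] .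
    have d2: "((\<lambda>y. f y \<bullet> f y) has_derivative (\<lambda>h. 0)) (at u)"
    proof (rule has_derivative_transform_within_open[OF _ op u])
      show "((\<lambda>y. 1) has_derivative (\<lambda>h. 0)) (at u)" by (rule has_derivative_const)
      fix y assume "y \<in> U" then show "1 = f y \<bullet> f y" using unit by (simp add: norm_eq_1)
    qed
    have "(\<lambda>h. f u \<bullet> L h + L h \<bullet> f u) = (\<lambda>h. 0)" using has_derivative_unique[OF d1 d2] .
    then have "f u \<bullet> L w + L w \<bullet> f u = 0" by metis
    then show ?thesis by (simp add: inner_commute)
  qed
  define c where "c = f u \<bullet> q"
  have cle: "\<bar>c\<bar> \<le> 1" using Cauchy_Schwarz_ineq2[of "f u" q] nfu nq unfolding c_def by simp
  have ffu: "f u \<bullet> f u = 1" using nfu by (simp add: norm_eq_1)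
  have qq: "q \<bullet> q = 1" using nq by (simp add: norm_eq_1)
  have cne: "c \<noteq> -1"
  proof
    assume "c = -1"
    then have "(f u + q) \<bullet> (f u + q) = 0" using ffu qq unfolding c_def by (simp add: algebra_simps inner_commute)
    then show False using fu by (simp add: add_eq_0_iff)
  qed
  define k where "k = DIM('k)"
  have k1: "k \<ge> 1" unfolding k_def using DIM_positive by (simp add: Suc_le_eq)
  define S where "S = (\<Sum>b\<in>Basis. (e b \<bullet> q)^2)"
  have S: "S + c^2 \<le> 1" using bessel[of Basis e "f u" q] orth fperp qq nfu unfolding S_def c_def e_def by auto
  have S0: "0 \<le> S" unfolding S_def by (intro sum_nonneg) auto
  have sumee: "(\<Sum>b\<in>Basis. e b \<bullet> e b) = real k" using orth unfolding k_def by simp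
  have div_eq: "div_Sigma (Phi k q) f u v = (\<Sum>b\<in>Basis. Xd (v b) \<bullet> e b)"
    if "((Phi k q \<circ> f) has_derivative Xd) (at u)" for Xd
    using frechet_derivative_at[OF that] unfolding div_Sigma_def fr e_def by simp
  define g where "g y = (f y \<bullet> q) *\<^sub>R f y - q" for y
  define G where "G h = (L h \<bullet> q) *\<^sub>R f u + c *\<^sub>R L h" for h
  have dg: "(g has_derivative G) (at u)"
    unfolding g_def[abs_def] G_def[abs_def] c_def
    using has_derivative_diff[OF bounded_bilinear.FDERIV[OF bounded_bilinear_scaleR has_derivative_inner_left[OF dfu, of q] dfu] has_derivative_const[of q]]
    by (simp add: algebra_simps)
  have Phif: "(Phi k q \<circ> f) y = H k (f y \<bullet> q) *\<^sub>R g y" for y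
    unfolding comp_def Phi_eq g_def by simp
  show ?thesis
  proof (cases "c = 1")
    case True
    have fuq: "f u = q"
    proof -
      have "(f u - q) \<bullet> (f u - q) = 0" using ffu qq True unfolding c_def by (simp add: algebra_simps inner_commute)
      then show ?thesis by simp
    qed
    define a where "a y = Ht k (f y \<bullet> q)" for y
    have g0: "g u = 0" using fuq qq unfolding g_def by simp
    have ca: "continuous (at u) a"
    proof -
      have c1: "continuous (at u within U) (\<lambda>y. f y \<bullet> q)"
        using has_derivative_continuous[OF has_derivative_inner_left[OF dfu, of q]] at_within_open[OF u op] by simp
      have img: "(\<lambda>y. f y \<bullet> q) ` U \<subseteq> {-1..1}"
      proof
        fix t assume "t \<in> (\<lambda>y. f y \<bullet> q) ` U"
        then obtain y where y: "y \<in> U" "t = f y \<bullet> q" by auto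
        have "\<bar>f y \<bullet> q\<bar> \<le> 1" using Cauchy_Schwarz_ineq2[of "f y" q] unit y nq by simp
        then show "t \<in> {-1..1}" using y by auto
      qed
      have c2: "continuous (at ((\<lambda>y. f y \<bullet> q) u) within (\<lambda>y. f y \<bullet> q) ` U) (Ht k)"
        using continuous_within_subset[OF Ht_cont[OF k1] img] True unfolding c_def by simp
      have "continuous (at u within U) (Ht k \<circ> (\<lambda>y. f y \<bullet> q))"
        by (rule continuous_within_compose[OF c1 c2])
      then show ?thesis using at_within_open[OF u op] unfolding a_def comp_def by simp
    qed
    have dX0: "((\<lambda>y. a y *\<^sub>R g y) has_derivative (\<lambda>h. a u *\<^sub>R G h)) (at u)"
      by (rule deriv_zero_prod[OF dg g0 ca])
    have dX: "((Phi k q \<circ> f) has_derivative (\<lambda>h. a u *\<^sub>R G h)) (at u)"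
    proof (rule has_derivative_transform_within_open[OF dX0 op u])
      fix y assume y: "y \<in> U"
      show "a y *\<^sub>R g y = (Phi k q \<circ> f) y"
      proof (cases "f y \<bullet> q = 1")
        case True
        have "(f y - q) \<bullet> (f y - q) = 0" using unit y qq True
          by (simp add: algebra_simps inner_commute norm_eq_1)
        then have "f y = q" by simp
        then show ?thesis unfolding Phif g_def using qq by simp
      next
        case False
        then show ?thesis unfolding Phif a_def Ht_def by simp
      qed
    qed
    have au: "a u = 1 / real k" unfolding a_def Ht_def using True unfolding c_def by simp
    have "div_Sigma (Phi k q) f u v = (\<Sum>b\<in>Basis. (1 / real k) * (e b \<bullet> e b))"
      unfolding div_eq[OF dX]
    proof (intro sum.cong refl)
      fix b :: 'k assume b: "b \<in> Basis"
      have qL: "L (v b) \<bullet> q = 0" using fperp[of "v b"] fuq by (simp add: inner_commute)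
      show "(a u *\<^sub>R G (v b)) \<bullet> e b = (1 / real k) * (e b \<bullet> e b)"
        unfolding au G_def e_def using qL True fperp[of "v b"] by (simp add: algebra_simps)
    qed
    also have "\<dots> = (1 / real k) * (\<Sum>b\<in>Basis. e b \<bullet> e b)" by (rule sum_distrib_left[symmetric])
    also have "\<dots> = 1" using sumee k1 by simp
    finally show ?thesis unfolding k_def by simp
  next
    case False
    have cI: "-1 < c" "c < 1" using cle cne False by auto
    obtain D where dH: "(H k has_real_derivative D) (at c)" and DD: "(1 - c^2) * D = real k * H k c * c - 1"
      using H_deriv[OF k1 cI] by blast
    have dH': "(H k has_derivative (\<lambda>t. D * t)) (at (f u \<bullet> q))"
      using dH unfolding has_field_derivative_def c_def by simp
    have da: "((\<lambda>y. H k (f y \<bullet> q)) has_derivative (\<lambda>h. D * (L h \<bullet> q))) (at u)"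
      using has_derivative_compose[OF has_derivative_inner_left[OF dfu, of q] dH'] .
    have dX: "((Phi k q \<circ> f) has_derivative (\<lambda>h. H k c *\<^sub>R G h + (D * (L h \<bullet> q)) *\<^sub>R g u)) (at u)"
      unfolding Phif[abs_def]
      using bounded_bilinear.FDERIV[OF bounded_bilinear_scaleR da dg] unfolding c_def by simp
    have "div_Sigma (Phi k q) f u v = (\<Sum>b\<in>Basis. H k c * c - D * (e b \<bullet> q)^2)"
      unfolding div_eq[OF dX]
    proof (intro sum.cong refl)
      fix b :: 'k assume b: "b \<in> Basis"
      have "e b \<bullet> e b = 1" using orth[OF b b] by simp
      then show "(H k c *\<^sub>R G (v b) + (D * (L (v b) \<bullet> q)) *\<^sub>R g u) \<bullet> e b = H k c * c - D * (e b \<bullet> q)^2"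
        unfolding G_def g_def e_def[symmetric] using fperp[of "v b"] unfolding e_def[symmetric]
        by (simp add: algebra_simps inner_commute power2_eq_square c_def)
    qed
    also have "\<dots> = real k * H k c * c - D * S"
      unfolding S_def by (simp add: sum_subtractf sum_distrib_left[symmetric] k_def)
    also have "\<dots> \<le> 1"
    proof -
      define A where "A = real k * H k c * c"
      have A1: "A \<le> 1" unfolding A_def by (rule kHc_le[OF k1 cI])
      have t: "1 - c^2 > 0" using cI by (simp add: abs_square_less_1)
      have DS: "(1 - c^2) * D * S = (A - 1) * S" using DD unfolding A_def by simp
      have "(1 - c^2) * (A - D * S) = A * (1 - c^2) - (1 - c^2) * D * S" by (simp add: algebra_simps)
      also have "\<dots> = A * (1 - c^2) - (A - 1) * S" using DS by simp
      also have "\<dots> \<le> A * (1 - c^2) + (1 - A) * (1 - c^2)"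
        using mult_left_mono[of S "1 - c^2" "1 - A"] S A1 by (simp add: algebra_simps)
      also have "\<dots> = (1 - c^2) * 1" by (simp add: algebra_simps)
      finally have "A - D * S \<le> 1" using t by (simp add: mult_le_cancel_left)
      then show ?thesis unfolding A_def .
    qed
    finally show ?thesis unfolding k_def by simp
  qed
qed



lemma a_rec: "1 \<le> i \<Longrightarrow> a_coef j (Suc i) = 2 * (real j - real i) / (2 * real j - real (Suc i)) * a_coef j i"
  by (cases i) auto

lemma term_tel:
  fixes c :: real
  assumes j: "j = Suc n" and i: "1 \<le> i" "i \<le> j"
  defines "T \<equiv> \<lambda>i. if i \<le> j then a_coef j i * (2 * real j - real i) * (1 + c) ^ n * (1 - c) ^ (j - i) else 0"
  shows "a_coef j i * (real j * (1 + c) ^ (j - 1) * (1 - c) ^ (j - i) - (1 + c) ^ j * (real (j - i) * (1 - c) ^ (j - i - 1)))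
         = T i - T (Suc i)"
proof (cases "i = j")
  case True
  then show ?thesis unfolding T_def using j by (simp add: algebra_simps)
next
  case False
  then obtain m where m: "j - i = Suc m" using i by (metis Suc_diff_Suc le_neq_implies_less)
  have ri: "real i = real j - real (Suc m)" using m i by linarith
  have Ti: "T i = a_coef j i * (2 * real j - real i) * (1 + c) ^ n * (1 - c) ^ Suc m" unfolding T_def using i m by simp
  have TS: "T (Suc i) = a_coef j (Suc i) * (2 * real j - real (Suc i)) * (1 + c) ^ n * (1 - c) ^ m"
    unfolding T_def using i m False by (simp add: Suc_diff_Suc[symmetric])
  have den: "2 * real j - real (Suc i) \<noteq> 0" using i False by simp
  have TS': "T (Suc i) = 2 * (real j - real i) * a_coef j i * (1 + c) ^ n * (1 - c) ^ m"
    unfolding TS a_rec[OF i(1)] using den by (simp add: field_simps)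
  have rn: "real n = real i + real m" using j m i by linarith
  show ?thesis unfolding Ti TS' m using j
    by (simp add: algebra_simps rn)
qed

lemma P_deriv:
  fixes c :: real
  assumes j: "j \<ge> 1"
  shows "((\<lambda>c. \<Sum>i=1..j. a_coef j i * ((1 + c) ^ j * (1 - c) ^ (j - i))) has_real_derivative (1 - c^2) ^ (j - 1)) (at c)"
proof -
  obtain n where jn: "j = Suc n" using j by (cases j) auto
  define T where "T \<equiv> \<lambda>i. if i \<le> j then a_coef j i * (2 * real j - real i) * (1 + c) ^ n * (1 - c) ^ (j - i) else 0"
  have "((\<lambda>c. \<Sum>i=1..j. a_coef j i * ((1 + c) ^ j * (1 - c) ^ (j - i))) has_real_derivative
     (\<Sum>i=1..j. a_coef j i * (real j * (1 + c) ^ (j - 1) * (1 - c) ^ (j - i) - (1 + c) ^ j * (real (j - i) * (1 - c) ^ (j - i - 1))))) (at c)"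
    by (rule derivative_eq_intros refl | simp add: algebra_simps)+
  moreover have "(\<Sum>i=1..j. a_coef j i * (real j * (1 + c) ^ (j - 1) * (1 - c) ^ (j - i) - (1 + c) ^ j * (real (j - i) * (1 - c) ^ (j - i - 1))))
      = (\<Sum>i=1..j. T i - T (Suc i))"
    using term_tel[OF jn, of _ c] unfolding T_def by (intro sum.cong) auto
  moreover have "(\<Sum>i=1..j. T i - T (Suc i)) = T 1 - T (Suc j)"
    using sum_Suc_diff[of 1 j "\<lambda>i. - T i"] j by simp
  moreover have "T 1 - T (Suc j) = (1 - c^2) ^ (j - 1)"
  proof -
    have "T 1 = (1 + c) ^ n * (1 - c) ^ n" unfolding T_def using j jn by simp
    also have "\<dots> = (1 - c^2) ^ (j - 1)" using jn by (simp add: power_mult_distrib[symmetric] power2_eq_square algebra_simps)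
    finally show ?thesis unfolding T_def by simp
  qed
  ultimately show ?thesis by simp
qed

lemma psi_even:
  assumes j: "j \<ge> 1" and r: "0 < r" "r < pi"
  shows "psi_k (2 * j) r = (\<Sum>i=1..j. - a_coef j i * sin r / (1 - cos r) ^ i)"
proof -
  define P where "P c = (\<Sum>i=1..j. a_coef j i * ((1 + c) ^ j * (1 - c) ^ (j - i)))" for c :: real
  define G where "G x = - P (cos x)" for x
  have dG: "(G has_real_derivative sin x ^ (2 * j - 1)) (at x)" for x
  proof -
    have "(G has_real_derivative - ((1 - (cos x)^2) ^ (j - 1) * (- sin x))) (at x)"
      unfolding G_def[abs_def] P_def[abs_def]
      by (intro DERIV_minus DERIV_chain2[OF P_deriv[OF j] DERIV_cos])
    moreover have "- ((1 - (cos x)^2) ^ (j - 1) * (- sin x)) = sin x ^ (2 * j - 1)"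
    proof -
      have "2 * j - 1 = Suc (2 * (j - 1))" using j by simp
      then show ?thesis by (simp add: sin_squared_eq[symmetric] power_mult)
    qed
    ultimately show ?thesis by simp
  qed
  define F where "F x = I_k (2 * j) x - G x" for x
  have "F pi = F r"
  proof (rule DERIV_isconst_end[OF r(2)])
    show "continuous_on {r..pi} F" unfolding F_def[abs_def]
    proof (intro continuous_intros)
      show "continuous_on {r..pi} (I_k (2 * j))" using r by (intro continuous_on_subset[OF I_cont]) auto
      show "continuous_on {r..pi} G"
        by (rule continuous_at_imp_continuous_on) (use dG DERIV_isCont in blast)
    qed
    fix x assume x: "r < x" "x < pi"
    have dI: "(I_k (2 * j) has_real_derivative sin x ^ (2 * j - 1)) (at x)" by (rule I_deriv) (use x r in auto)
    show "(F has_real_derivative 0) (at x)"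
      unfolding F_def[abs_def] using DERIV_diff[OF dI dG[of x]] by simp
  qed
  moreover have "G pi = 0" unfolding G_def P_def using j by (simp add: zero_power)
  ultimately have IG: "I_k (2 * j) r - I_k (2 * j) pi = - P (cos r)" unfolding F_def G_def by simp
  define s where "s = sin r"
  define c where "c = cos r"
  have s: "s > 0" unfolding s_def using r by (intro sin_gt_zero) auto
  have c1: "1 - c > 0" unfolding c_def using r cos_monotone_0_pi[of 0 r] by (simp add: cos_one_2pi_int)
  have key: "(1 + c) ^ j * (1 - c) ^ (j - i) * (1 - c) ^ i = s ^ (2 * j - 1) * s" if "i \<le> j" for i
  proof -
    have "(1 + c) ^ j * (1 - c) ^ (j - i) * (1 - c) ^ i = (1 + c) ^ j * (1 - c) ^ j"
      using that by (simp add: mult.assoc power_add[symmetric])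
    also have "\<dots> = ((1 + c) * (1 - c)) ^ j" by (rule power_mult_distrib[symmetric])
    also have "(1 + c) * (1 - c) = s^2" unfolding s_def c_def by (simp add: sin_squared_eq power2_eq_square algebra_simps)
    also have "(s^2) ^ j = s ^ (2 * j)" by (rule power_mult[symmetric])
    also have "2 * j = Suc (2 * j - 1)" using j by simp
    also have "s ^ Suc (2 * j - 1) = s ^ (2 * j - 1) * s" by (rule power_Suc2)
    finally show ?thesis .
  qed
  have "psi_k (2 * j) r = - P c / s ^ (2 * j - 1)" unfolding psi_k_def IG s_def c_def by simp
  also have "\<dots> = (\<Sum>i=1..j. - a_coef j i * ((1 + c) ^ j * (1 - c) ^ (j - i)) / s ^ (2 * j - 1))"
    unfolding P_def by (simp add: sum_divide_distrib sum_negf)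
  also have "\<dots> = (\<Sum>i=1..j. - a_coef j i * s / (1 - c) ^ i)"
  proof (intro sum.cong refl)
    fix i assume "i \<in> {1..j}"
    then have "i \<le> j" by simp
    from key[OF this] show "- a_coef j i * ((1 + c) ^ j * (1 - c) ^ (j - i)) / s ^ (2 * j - 1) = - a_coef j i * s / (1 - c) ^ i"
      using s c1 by (simp add: field_simps)
  qed
  finally show ?thesis unfolding s_def c_def .
qed

lemma Psi_eq:
  fixes p x :: "'a::euclidean_space"
  assumes np: "norm p = 1" and nx: "norm x = 1" and xp: "x \<noteq> p"
  shows "Psi k p x = psi_k k (sdist p x) *\<^sub>R grad_sdist p x"
proof -
  define t where "t = x \<bullet> p"
  have tle: "\<bar>t\<bar> \<le> 1" using Cauchy_Schwarz_ineq2[of x p] np nx unfolding t_def by simp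
  have xx: "x \<bullet> x = 1" "p \<bullet> p = 1" using np nx by (simp_all add: norm_eq_1)
  have tne: "t \<noteq> 1"
  proof
    assume "t = 1"
    then have "(x - p) \<bullet> (x - p) = 0" using xx unfolding t_def by (simp add: algebra_simps inner_commute)
    then show False using xp by simp
  qed
  show ?thesis
  proof (cases "t = -1")
    case True
    have a1: "arccos (x \<bullet> - p) = 0" using True unfolding t_def by simp
    have a2: "sin (arccos (x \<bullet> p)) = 0" using True unfolding t_def by simp
    have "Psi k p x = 0" unfolding Psi_def Phi_def sdist_def a1 phi_k_def by simp
    moreover have "grad_sdist p x = 0" unfolding grad_sdist_def sdist_def a2 by simp
    ultimately show ?thesis by simp
  next
    case False
    have tI: "-1 < t" "t < 1" using tle tne False by auto
    define d where "d = arccos t"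
    have d: "0 < d" "d < pi" using tI arccos_lt_bounded unfolding d_def by auto
    have s: "sin d > 0" using d by (intro sin_gt_zero) auto
    have sd: "sdist (- p) x = pi - d" using tle unfolding sdist_def d_def t_def by (simp add: arccos_minus abs_le_iff)
    have sd2: "sdist p x = d" unfolding sdist_def d_def t_def ..
    have Isym: "I_k k (pi - d) = I_k k pi - I_k k d" using I_sym d by auto
    have xpt: "x \<bullet> p = t" unfolding t_def ..
    have spd: "sin (pi - d) = sin d" by simp
    define X where "X = sin d ^ (k - 1) * sin d"
    have L: "Psi k p x = ((I_k k pi - I_k k d) / X) *\<^sub>R (- (t *\<^sub>R x - p))"
      unfolding Psi_def Phi_def grad_sdist_def sd phi_k_def Isym spd X_def using d xpt by simp
    have R: "psi_k k (sdist p x) *\<^sub>R grad_sdist p x = ((I_k k d - I_k k pi) / X) *\<^sub>R (t *\<^sub>R x - p)"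
      unfolding psi_k_def grad_sdist_def sd2 X_def using xpt by simp
    have AB: "(I_k k pi - I_k k d) / X = - ((I_k k d - I_k k pi) / X)" by (simp add: minus_divide_left)
    show ?thesis unfolding L R AB scaleR_minus_left scaleR_minus_right minus_minus by (rule refl)
  qed
qed

theorem lemma2p5:
  fixes p :: "'a::euclidean_space"
    and U :: "'k::euclidean_space set"
    and f :: "'k \<Rightarrow> 'a"
  assumes "DIM('k) \<ge> 2"
    and "norm p = 1"
    and "minimal_immersion U f"
  shows "(\<forall>u\<in>U. \<forall>v. tangent_onb (frechet_derivative f (at u)) v \<longrightarrow>
            (f u \<noteq> - p \<longrightarrow> div_Sigma (Phi DIM('k) p) f u v \<le> 1) \<and>
            (f u \<noteq> p \<longrightarrow> div_Sigma (Psi DIM('k) p) f u v \<le> 1))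
       \<and> (\<forall>x::'a. norm x = 1 \<and> x \<noteq> p \<longrightarrow>
            Psi DIM('k) p x = psi_k DIM('k) (sdist p x) *\<^sub>R grad_sdist p x)
       \<and> (\<forall>j. DIM('k) = 2 * j \<longrightarrow>
            (\<forall>r. 0 < r \<and> r < pi \<longrightarrow>
               psi_k DIM('k) r = (\<Sum>i=1..j. - a_coef j i * sin r / (1 - cos r) ^ i)))"
proof (intro conjI ballI allI impI)
  fix u v assume u: "u \<in> U" and tb: "tangent_onb (frechet_derivative f (at u)) v"
  {
    assume "f u \<noteq> - p"
    then show "div_Sigma (Phi DIM('k) p) f u v \<le> 1" by (rule div_le_1[OF assms(2,3) u tb])
  next
    assume "f u \<noteq> p"
    then have fu: "f u \<noteq> - (- p)" by simp
    have np: "norm (- p) = 1" using assms(2) by simp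
    have "Psi DIM('k) p = Phi DIM('k) (- p)" unfolding Psi_def ..
    then show "div_Sigma (Psi DIM('k) p) f u v \<le> 1" using div_le_1[OF np assms(3) u tb fu] by simp
  }
next
  fix x :: 'a assume "norm x = 1 \<and> x \<noteq> p"
  then show "Psi DIM('k) p x = psi_k DIM('k) (sdist p x) *\<^sub>R grad_sdist p x"
    using Psi_eq[OF assms(2)] by blast
next
  fix j :: nat and r :: real assume jd: "DIM('k) = 2 * j" and r: "0 < r \<and> r < pi"
  have j: "j \<ge> 1" using jd DIM_positive[where 'a='k] by linarith
  show "psi_k DIM('k) r = (\<Sum>i=1..j. - a_coef j i * sin r / (1 - cos r) ^ i)"
    unfolding jd using psi_even[OF j] r by blast
qed

end
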